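(* Let $\tau$ be any substitution. Then (i) no two different basic generators for $\tau$ are G related, and (ii) every generator for $\tau$ is G related to a unique basic generator.
   Context: Let $\mathcal{A}$ be a finite nonempty alphabet, $\mathcal{A}^*$ the finite words over $\mathcal{A}$ (including the empty word), $\mathcal{A}^+$ the nonempty words, $|u|$ the length of $u$. A word $u$ is a factor of $v$ if $v=w_1uw_2$ for some words $w_1,w_2$. A substitution is a map $\tau:\mathcal{A}\to\mathcal{A}^+$ extended to a concatenation-respecting map on words. The language $\mathcal{L}(\tau)$ is the set of words that are factors of $\tau^n(a)$ for some letter $a$ and some $n\ge1$. A generator for $\tau$ is a triple $(v,u,w)$ with $v,u,w\in\mathcal{A}^+$, $u\in\mathcal{L}(\tau)$ and $\tau(u)=vuw$; $v$, $u$, $w$ are its left wing, center and right wing, and its length is $|u|$. If $(v,u,cw)$ is a generator with $c\in\mathcal{A}$, $w\in\mathcal{A}^*$, its right extension is the generator $(v,uc,w\tau(c))$; if $(vc,u,w)$ is a generator with $c\in\mathcal{A}$, $v\in\mathcal{A}^*$, its left extension is the generator $(\tau(c)v,cu,w)$. Two generators $g_1,g_2$ are G related ($g_1\sim_G g_2$) if there is a generator $g_3$ obtainable from $g_1$ and also from $g_2$ by finite (possibly empty) sequences of left and right extensions. A generator is basic if it is not G related to any generator of smaller length. *)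

theory Defs
  imports Main
begin

definition is_substitution :: "('a \<Rightarrow> 'a list) \<Rightarrow> bool" where
  "is_substitution \<tau> \<longleftrightarrow> (\<forall>a. \<tau> a \<noteq> [])"

definition subst_word :: "('a \<Rightarrow> 'a list) \<Rightarrow> 'a list \<Rightarrow> 'a list" where
  "subst_word \<tau> w = concat (map \<tau> w)"

definition is_factor :: "'a list \<Rightarrow> 'a list \<Rightarrow> bool" where
  "is_factor u v \<longleftrightarrow> (\<exists>w1 w2. v = w1 @ u @ w2)"

definition lang :: "('a \<Rightarrow> 'a list) \<Rightarrow> 'a list set" where
  "lang \<tau> = {u. \<exists>a n. n \<ge> 1 \<and> is_factor u ((subst_word \<tau> ^^ n) [a])}"

definition generator :: "('a \<Rightarrow> 'a list) \<Rightarrow> 'a list \<times> 'a list \<times> 'a list \<Rightarrow> bool" where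
  "generator \<tau> g \<longleftrightarrow> (case g of (v, u, w) \<Rightarrow>
     v \<noteq> [] \<and> u \<noteq> [] \<and> w \<noteq> [] \<and> u \<in> lang \<tau> \<and> subst_word \<tau> u = v @ u @ w)"

definition gen_length :: "'a list \<times> 'a list \<times> 'a list \<Rightarrow> nat" where
  "gen_length g = length (fst (snd g))"

definition ext_step :: "('a \<Rightarrow> 'a list) \<Rightarrow> 'a list \<times> 'a list \<times> 'a list
    \<Rightarrow> 'a list \<times> 'a list \<times> 'a list \<Rightarrow> bool" where
  "ext_step \<tau> g h \<longleftrightarrow> generator \<tau> g \<and>
     ((\<exists>v u c w. g = (v, u, c # w) \<and> h = (v, u @ [c], w @ \<tau> c)) \<or>
      (\<exists>v u c w. g = (v @ [c], u, w) \<and> h = (\<tau> c @ v, c # u, w)))"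

definition G_related :: "('a \<Rightarrow> 'a list) \<Rightarrow> 'a list \<times> 'a list \<times> 'a list
    \<Rightarrow> 'a list \<times> 'a list \<times> 'a list \<Rightarrow> bool" where
  "G_related \<tau> g1 g2 \<longleftrightarrow> generator \<tau> g1 \<and> generator \<tau> g2 \<and>
     (\<exists>g3. (ext_step \<tau>)\<^sup>*\<^sup>* g1 g3 \<and> (ext_step \<tau>)\<^sup>*\<^sup>* g2 g3)"

definition basic :: "('a \<Rightarrow> 'a list) \<Rightarrow> 'a list \<times> 'a list \<times> 'a list \<Rightarrow> bool" where
  "basic \<tau> g \<longleftrightarrow> generator \<tau> g \<and>
     \<not> (\<exists>h. G_related \<tau> g h \<and> gen_length h < gen_length g)"

end

theory Submission
  imports Defs
begin

lemma sw_simps[simp]: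
  "subst_word \<tau> [] = []" "subst_word \<tau> (c # s) = \<tau> c @ subst_word \<tau> s"
  "subst_word \<tau> (a @ b) = subst_word \<tau> a @ subst_word \<tau> b"
  by (simp_all add: subst_word_def)

lemma len_sw: "is_substitution \<tau> \<Longrightarrow> length (subst_word \<tau> s) \<ge> length s"
proof (induction s)
  case (Cons c s)
  then have "\<tau> c \<noteq> []" by (simp add: is_substitution_def)
  then have "length (\<tau> c) \<ge> 1" by (cases "\<tau> c") auto
  with Cons show ?case by simp
qed simp

lemma lang_factor: "u \<in> lang \<tau> \<Longrightarrow> is_factor z u \<Longrightarrow> z \<in> lang \<tau>"
proof -
  assume "u \<in> lang \<tau>" "is_factor z u"
  then obtain a n w1 w2 x1 x2 where "n \<ge> 1" "(subst_word \<tau> ^^ n) [a] = w1 @ u @ w2" "u = x1 @ z @ x2"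
    unfolding lang_def is_factor_def by blast
  then have "n \<ge> 1 \<and> (subst_word \<tau> ^^ n) [a] = (w1 @ x1) @ z @ (x2 @ w2)" by simp
  then show ?thesis unfolding lang_def is_factor_def by blast
qed

lemma lang_sw: "u \<in> lang \<tau> \<Longrightarrow> subst_word \<tau> u \<in> lang \<tau>"
proof -
  assume "u \<in> lang \<tau>"
  then obtain a n w1 w2 where "n \<ge> 1" "(subst_word \<tau> ^^ n) [a] = w1 @ u @ w2"
    unfolding lang_def is_factor_def by blast
  then have "(subst_word \<tau> ^^ Suc n) [a] = subst_word \<tau> w1 @ subst_word \<tau> u @ subst_word \<tau> w2"
    by simp
  then have "Suc n \<ge> 1 \<and> (subst_word \<tau> ^^ Suc n) [a] = subst_word \<tau> w1 @ subst_word \<tau> u @ subst_word \<tau> w2"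
    by simp
  then show ?thesis unfolding lang_def is_factor_def by blast
qed

definition Rx :: "('a \<Rightarrow> 'a list) \<Rightarrow> 'a list \<times> 'a list \<times> 'a list \<Rightarrow> 'a list \<times> 'a list \<times> 'a list" where
  "Rx \<tau> g = (case g of (v,u,w) \<Rightarrow> (v, u @ [hd w], tl w @ \<tau> (hd w)))"

definition Lx :: "('a \<Rightarrow> 'a list) \<Rightarrow> 'a list \<times> 'a list \<times> 'a list \<Rightarrow> 'a list \<times> 'a list \<times> 'a list" where
  "Lx \<tau> g = (case g of (v,u,w) \<Rightarrow> (\<tau> (last v) @ butlast v, last v # u, w))"

lemma gen_R: assumes "is_substitution \<tau>" "generator \<tau> g" shows "generator \<tau> (Rx \<tau> g)"
proof -
  obtain v u w where g: "g = (v,u,w)" by (cases g)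
  with assms have h: "v \<noteq> []" "u \<noteq> []" "w \<noteq> []" "u \<in> lang \<tau>" "subst_word \<tau> u = v @ u @ w"
    by (auto simp: generator_def)
  then obtain c w' where w: "w = c # w'" by (cases w) auto
  have "is_factor (u @ [c]) (subst_word \<tau> u)" using h w unfolding is_factor_def by auto
  then have "u @ [c] \<in> lang \<tau>" using lang_factor lang_sw h by blast
  moreover have "\<tau> c \<noteq> []" using assms(1) by (simp add: is_substitution_def)
  ultimately show ?thesis using h w g by (simp add: generator_def Rx_def)
qed

lemma gen_L: assumes "is_substitution \<tau>" "generator \<tau> g" shows "generator \<tau> (Lx \<tau> g)"
proof -
  obtain v u w where g: "g = (v,u,w)" by (cases g)
  with assms have h: "v \<noteq> []" "u \<noteq> []" "w \<noteq> []" "u \<in> lang \<tau>" "subst_word \<tau> u = v @ u @ w"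
    by (auto simp: generator_def)
  then obtain c v' where v: "v = v' @ [c]" by (metis append_butlast_last_id)
  have "is_factor (c # u) (subst_word \<tau> u)" using h v unfolding is_factor_def by auto
  then have "c # u \<in> lang \<tau>" using lang_factor lang_sw h by blast
  moreover have "\<tau> c \<noteq> []" using assms(1) by (simp add: is_substitution_def)
  ultimately show ?thesis using h v g by (simp add: generator_def Lx_def)
qed

lemma ext_step_iff: "ext_step \<tau> g h \<longleftrightarrow> generator \<tau> g \<and> (h = Rx \<tau> g \<or> h = Lx \<tau> g)"
proof
  assume "ext_step \<tau> g h" then show "generator \<tau> g \<and> (h = Rx \<tau> g \<or> h = Lx \<tau> g)"
    unfolding ext_step_def Rx_def Lx_def by auto
next
  assume a: "generator \<tau> g \<and> (h = Rx \<tau> g \<or> h = Lx \<tau> g)"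
  obtain v u w where g: "g = (v,u,w)" by (cases g)
  with a have h: "v \<noteq> []" "w \<noteq> []" by (auto simp: generator_def)
  show "ext_step \<tau> g h"
  proof (cases "h = Rx \<tau> g")
    case True
    then have "g = (v, u, hd w # tl w) \<and> h = (v, u @ [hd w], tl w @ \<tau> (hd w))"
      using g h by (simp add: Rx_def)
    then show ?thesis using a unfolding ext_step_def by blast
  next
    case False
    then have "h = Lx \<tau> g" using a by auto
    then have "g = (butlast v @ [last v], u, w) \<and> h = (\<tau> (last v) @ butlast v, last v # u, w)"
      using g h by (simp add: Lx_def)
    then show ?thesis using a unfolding ext_step_def by blast
  qed
qed

lemma LR_comm: "Lx \<tau> (Rx \<tau> g) = Rx \<tau> (Lx \<tau> g)"
  by (cases g) (simp add: Lx_def Rx_def)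

lemma LR_comm_pow: "(Rx \<tau> ^^ j) ((Lx \<tau> ^^ i) g) = (Lx \<tau> ^^ i) ((Rx \<tau> ^^ j) g)"
proof -
  have 1: "Rx \<tau> ((Lx \<tau> ^^ i) g) = (Lx \<tau> ^^ i) (Rx \<tau> g)" for g
    by (induction i) (simp_all add: LR_comm[symmetric])
  show ?thesis by (induction j) (simp_all add: 1 funpow_swap1)
qed

definition E where "E \<tau> i j g = (Lx \<tau> ^^ i) ((Rx \<tau> ^^ j) g)"

lemma E_comp: "E \<tau> a b (E \<tau> c d g) = E \<tau> (a + c) (b + d) g"
  unfolding E_def by (simp add: LR_comm_pow funpow_add)

lemma gen_pow: assumes "is_substitution \<tau>" "generator \<tau> g"
  shows "generator \<tau> ((Rx \<tau> ^^ j) g)" "generator \<tau> ((Lx \<tau> ^^ i) g)"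
proof -
  show "generator \<tau> ((Rx \<tau> ^^ j) g)" by (induction j) (simp_all add: gen_R assms)
  show "generator \<tau> ((Lx \<tau> ^^ i) g)" by (induction i) (simp_all add: gen_L assms)
qed

lemma gen_E: "is_substitution \<tau> \<Longrightarrow> generator \<tau> g \<Longrightarrow> generator \<tau> (E \<tau> i j g)"
  unfolding E_def by (simp add: gen_pow)

lemma len_E: "gen_length (E \<tau> i j g) = i + j + gen_length g"
proof -
  have r: "gen_length (Rx \<tau> g) = Suc (gen_length g)" for g
    by (cases g) (simp add: Rx_def gen_length_def)
  have l: "gen_length (Lx \<tau> g) = Suc (gen_length g)" for g
    by (cases g) (simp add: Lx_def gen_length_def)
  have "gen_length ((Rx \<tau> ^^ j) g) = j + gen_length g" by (induction j) (simp_all add: r)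
  moreover have "gen_length ((Lx \<tau> ^^ i) g) = i + gen_length g" for g by (induction i) (simp_all add: l)
  ultimately show ?thesis unfolding E_def by simp
qed


lemma rtr_char: assumes "is_substitution \<tau>" "generator \<tau> g"
  shows "(ext_step \<tau>)\<^sup>*\<^sup>* g h \<longleftrightarrow> (\<exists>i j. h = E \<tau> i j g)"
proof
  assume "(ext_step \<tau>)\<^sup>*\<^sup>* g h" then show "\<exists>i j. h = E \<tau> i j g"
  proof induction
    case base then show ?case by (rule exI[of _ 0], rule exI[of _ 0]) (simp add: E_def)
  next
    case (step y z)
    then obtain i j where y: "y = E \<tau> i j g" by blast
    from step(2) have "z = Rx \<tau> y \<or> z = Lx \<tau> y" by (simp add: ext_step_iff)
    then show ?case
    proof
      assume "z = Rx \<tau> y" then have "z = E \<tau> 0 1 y" by (simp add: E_def)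
      then have "z = E \<tau> (0 + i) (1 + j) g" using y E_comp[of \<tau> 0 1 i j g] by simp
      then show ?thesis by blast
    next
      assume "z = Lx \<tau> y" then have "z = E \<tau> 1 0 y" by (simp add: E_def)
      then have "z = E \<tau> (1 + i) (0 + j) g" using y E_comp[of \<tau> 1 0 i j g] by simp
      then show ?thesis by blast
    qed
  qed
next
  assume "\<exists>i j. h = E \<tau> i j g"
  then obtain i j where h: "h = E \<tau> i j g" by blast
  have "(ext_step \<tau>)\<^sup>*\<^sup>* g ((Rx \<tau> ^^ j) g)"
  proof (induction j)
    case (Suc j)
    have "ext_step \<tau> ((Rx \<tau> ^^ j) g) ((Rx \<tau> ^^ Suc j) g)"
      by (simp add: ext_step_iff gen_pow assms)
    then show ?case using Suc by (rule rtranclp.rtrancl_into_rtrancl[rotated])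
  qed simp
  moreover have "(ext_step \<tau>)\<^sup>*\<^sup>* ((Rx \<tau> ^^ j) g) ((Lx \<tau> ^^ i) ((Rx \<tau> ^^ j) g))"
  proof (induction i)
    case (Suc i)
    have "ext_step \<tau> ((Lx \<tau> ^^ i) ((Rx \<tau> ^^ j) g)) ((Lx \<tau> ^^ Suc i) ((Rx \<tau> ^^ j) g))"
      by (simp add: ext_step_iff gen_pow assms)
    then show ?case using Suc by (rule rtranclp.rtrancl_into_rtrancl[rotated])
  qed simp
  ultimately show "(ext_step \<tau>)\<^sup>*\<^sup>* g h" unfolding h E_def by simp
qed

lemma G_char: assumes "is_substitution \<tau>"
  shows "G_related \<tau> g1 g2 \<longleftrightarrow> generator \<tau> g1 \<and> generator \<tau> g2 \<and> (\<exists>i j k l. E \<tau> i j g1 = E \<tau> k l g2)"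
proof
  assume a: "G_related \<tau> g1 g2"
  then have g: "generator \<tau> g1" "generator \<tau> g2" unfolding G_related_def by simp_all
  from a obtain g3 where "(ext_step \<tau>)\<^sup>*\<^sup>* g1 g3" "(ext_step \<tau>)\<^sup>*\<^sup>* g2 g3"
    unfolding G_related_def by blast
  then obtain i j k l where "g3 = E \<tau> i j g1" "g3 = E \<tau> k l g2"
    using rtr_char[OF assms g(1)] rtr_char[OF assms g(2)] by blast
  then show "generator \<tau> g1 \<and> generator \<tau> g2 \<and> (\<exists>i j k l. E \<tau> i j g1 = E \<tau> k l g2)"
    using g by metis
next
  assume a: "generator \<tau> g1 \<and> generator \<tau> g2 \<and> (\<exists>i j k l. E \<tau> i j g1 = E \<tau> k l g2)"
  then obtain i j k l where e: "E \<tau> i j g1 = E \<tau> k l g2" by blast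
  have "(ext_step \<tau>)\<^sup>*\<^sup>* g1 (E \<tau> i j g1)" using rtr_char[OF assms] a by blast
  moreover have "(ext_step \<tau>)\<^sup>*\<^sup>* g2 (E \<tau> i j g1)" using rtr_char[OF assms] a e by blast
  ultimately show "G_related \<tau> g1 g2" unfolding G_related_def using a by blast
qed

lemma G_sym: "G_related \<tau> g1 g2 \<Longrightarrow> G_related \<tau> g2 g1"
  unfolding G_related_def by blast

lemma G_refl: "generator \<tau> g \<Longrightarrow> G_related \<tau> g g"
  unfolding G_related_def by blast

lemma G_trans: assumes "is_substitution \<tau>" "G_related \<tau> g1 g2" "G_related \<tau> g2 g3"
  shows "G_related \<tau> g1 g3"
proof -
  from assms(2) have "generator \<tau> g1 \<and> generator \<tau> g2 \<and> (\<exists>i j k l. E \<tau> i j g1 = E \<tau> k l g2)"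
    using G_char[OF assms(1)] by blast
  then obtain i j k l where 1: "E \<tau> i j g1 = E \<tau> k l g2" and g1: "generator \<tau> g1" by blast
  from assms(3) have "generator \<tau> g3 \<and> (\<exists>i j k l. E \<tau> i j g2 = E \<tau> k l g3)"
    using G_char[OF assms(1)] by blast
  then obtain a b c d where 2: "E \<tau> a b g2 = E \<tau> c d g3" and g3: "generator \<tau> g3" by blast
  have "E \<tau> (a+i) (b+j) g1 = E \<tau> a b (E \<tau> k l g2)" using 1 E_comp[of \<tau> a b i j g1] by simp
  also have "\<dots> = E \<tau> k l (E \<tau> a b g2)" by (simp only: E_comp add.commute)
  also have "\<dots> = E \<tau> (k+c) (l+d) g3" using 2 E_comp by simp
  finally show ?thesis using G_char[OF assms(1)] g1 g3 by blast
qed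

lemma R_inj: assumes "generator \<tau> g1" "generator \<tau> g2" "Rx \<tau> g1 = Rx \<tau> g2" shows "g1 = g2"
proof -
  obtain v1 u1 w1 v2 u2 w2 where g: "g1 = (v1,u1,w1)" "g2 = (v2,u2,w2)" by (cases g1, cases g2)
  with assms have "w1 \<noteq> []" "w2 \<noteq> []" by (auto simp: generator_def)
  with assms g show ?thesis by (cases w1; cases w2) (auto simp: Rx_def)
qed

lemma L_inj: assumes "generator \<tau> g1" "generator \<tau> g2" "Lx \<tau> g1 = Lx \<tau> g2" shows "g1 = g2"
proof -
  obtain v1 u1 w1 v2 u2 w2 where g: "g1 = (v1,u1,w1)" "g2 = (v2,u2,w2)" by (cases g1, cases g2)
  with assms have "v1 \<noteq> []" "v2 \<noteq> []" by (auto simp: generator_def)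
  then obtain v1' c1 v2' c2 where "v1 = v1' @ [c1]" "v2 = v2' @ [c2]" by (metis append_butlast_last_id)
  with assms g show ?thesis by (auto simp: Lx_def)
qed

lemma R_inj_pow: assumes "is_substitution \<tau>" "generator \<tau> g1" "generator \<tau> g2"
  "(Rx \<tau> ^^ j) g1 = (Rx \<tau> ^^ j) g2" shows "g1 = g2"
  using assms(4)
proof (induction j)
  case (Suc j)
  then have "Rx \<tau> ((Rx \<tau> ^^ j) g1) = Rx \<tau> ((Rx \<tau> ^^ j) g2)" by simp
  then have "(Rx \<tau> ^^ j) g1 = (Rx \<tau> ^^ j) g2"
    using R_inj gen_pow(1)[OF assms(1)] assms(2,3) by blast
  then show ?case using Suc by blast
qed simp

lemma L_inj_pow: assumes "is_substitution \<tau>" "generator \<tau> g1" "generator \<tau> g2"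
  "(Lx \<tau> ^^ j) g1 = (Lx \<tau> ^^ j) g2" shows "g1 = g2"
  using assms(4)
proof (induction j)
  case (Suc j)
  then have "Lx \<tau> ((Lx \<tau> ^^ j) g1) = Lx \<tau> ((Lx \<tau> ^^ j) g2)" by simp
  then have "(Lx \<tau> ^^ j) g1 = (Lx \<tau> ^^ j) g2"
    using L_inj gen_pow(2)[OF assms(1)] assms(2,3) by blast
  then show ?case using Suc by blast
qed simp


lemma L_shape: assumes "is_substitution \<tau>" "generator \<tau> (v,u,w)"
  shows "\<exists>V x. (Lx \<tau> ^^ m) (v,u,w) = (V, x @ u, w) \<and> subst_word \<tau> x @ v = V @ x \<and> length x = m"
proof (induction m)
  case 0 then show ?case by simp
next
  case (Suc m)
  then obtain V x where h: "(Lx \<tau> ^^ m) (v,u,w) = (V, x @ u, w)" "subst_word \<tau> x @ v = V @ x" "length x = m"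
    by blast
  have "generator \<tau> (V, x @ u, w)" using gen_pow(2)[OF assms, of m] h(1) by simp
  then have "V \<noteq> []" by (simp add: generator_def)
  then obtain V' c where V: "V = V' @ [c]" by (metis append_butlast_last_id)
  have "(Lx \<tau> ^^ Suc m) (v,u,w) = (\<tau> c @ V', (c # x) @ u, w)" using h(1) V by (simp add: Lx_def)
  moreover have "subst_word \<tau> (c # x) @ v = (\<tau> c @ V') @ (c # x)" using h(2) V by simp
  moreover have "length (c # x) = Suc m" using h(3) by simp
  ultimately show ?case by blast
qed

lemma R_shape: "\<exists>y W. (Rx \<tau> ^^ m) (v,u,w) = (v, u @ y, W) \<and> length y = m"
proof (induction m)
  case 0 then show ?case by simp
next
  case (Suc m)
  then obtain y W where h: "(Rx \<tau> ^^ m) (v,u,w) = (v, u @ y, W)" "length y = m" by blast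
  have "(Rx \<tau> ^^ Suc m) (v,u,w) = (v, u @ (y @ [hd W]), tl W @ \<tau> (hd W))" using h by (simp add: Rx_def)
  moreover have "length (y @ [hd W]) = Suc m" using h(2) by simp
  ultimately show ?case by blast
qed

lemma R_det: assumes "is_substitution \<tau>" "generator \<tau> (v,u,w)" "generator \<tau> (v,u@s,w')"
  shows "(Rx \<tau> ^^ length s) (v,u,w) = (v,u@s,w')"
  using assms(2,3)
proof (induction s arbitrary: u w)
  case Nil
  then show ?case by (simp add: generator_def)
next
  case (Cons c s)
  from Cons.prems have a: "subst_word \<tau> u = v @ u @ w" "w \<noteq> []"
    "subst_word \<tau> (u @ c # s) = v @ u @ c # s @ w'" by (auto simp: generator_def)
  then have "w @ subst_word \<tau> (c # s) = c # s @ w'" by simp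
  with a(2) obtain w0 where w: "w = c # w0" by (cases w) auto
  have "Rx \<tau> (v,u,w) = (v, u @ [c], w0 @ \<tau> c)" using w by (simp add: Rx_def)
  moreover have "generator \<tau> (v, u @ [c], w0 @ \<tau> c)" using gen_R[OF assms(1) Cons.prems(1)] calculation by simp
  moreover have "generator \<tau> (v, (u @ [c]) @ s, w')" using Cons.prems(2) by simp
  ultimately have "(Rx \<tau> ^^ length s) (Rx \<tau> (v,u,w)) = (v, (u @ [c]) @ s, w')" using Cons.IH by simp
  then show ?case by (simp add: funpow_swap1)
qed


lemma key: assumes S: "is_substitution \<tau>" and B: "basic \<tau> b1" "basic \<tau> b2"
  and len: "gen_length b1 = gen_length b2" and eq: "(Lx \<tau> ^^ m) b1 = (Rx \<tau> ^^ m) b2"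
  shows "b1 = b2"
proof (cases "m = 0")
  case True then show ?thesis using eq by simp
next
  case False
  obtain v1 u1 w1 v2 u2 w2 where b: "b1 = (v1,u1,w1)" "b2 = (v2,u2,w2)" by (cases b1, cases b2)
  have g1: "generator \<tau> (v1,u1,w1)" and g2: "generator \<tau> (v2,u2,w2)" using B b by (auto simp: basic_def)
  then have h1: "v1 \<noteq> []" "u1 \<noteq> []" "w1 \<noteq> []" "u1 \<in> lang \<tau>" "subst_word \<tau> u1 = v1 @ u1 @ w1"
    and h2: "v2 \<noteq> []" "u2 \<noteq> []" "w2 \<noteq> []" "u2 \<in> lang \<tau>" "subst_word \<tau> u2 = v2 @ u2 @ w2"
    by (auto simp: generator_def)
  obtain V x where L: "(Lx \<tau> ^^ m) (v1,u1,w1) = (V, x @ u1, w1)" "subst_word \<tau> x @ v1 = V @ x" "length x = m"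
    using L_shape[OF S g1] by blast
  obtain y W where R: "(Rx \<tau> ^^ m) (v2,u2,w2) = (v2, u2 @ y, W)" "length y = m"
    using R_shape by blast
  from eq L R b have e: "V = v2" "x @ u1 = u2 @ y" "w1 = W" by auto
  have ln: "length u1 = length u2" using len b by (simp add: gen_length_def)
  show ?thesis
  proof (cases "length u1 \<le> m")
    case True
    define t where "t = drop (length u2) x"
    have "take (length u2) (x @ u1) = u2" using e(2) by simp
    then have "take (length u2) x = u2" using True ln L(3) by simp
    then have xt: "x = u2 @ t" unfolding t_def by (metis append_take_drop_id)
    have "subst_word \<tau> u2 @ subst_word \<tau> t @ v1 = v2 @ u2 @ t" using L(2) e(1) xt by simp
    then have "w2 @ subst_word \<tau> t @ v1 = t" using h2(5) by simp
    then have "length w2 + length (subst_word \<tau> t) + length v1 = length t" by (metis length_append add.assoc)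
    moreover have "length (subst_word \<tau> t) \<ge> length t" using len_sw[OF S] .
    moreover have "length w2 \<ge> 1" "length v1 \<ge> 1" using h2(3) h1(1) by (auto simp: Suc_le_eq)
    ultimately show ?thesis by linarith
  next
    case False
    define z where "z = drop m u2"
    have "take m (x @ u1) = take m u2" using e(2) False ln by simp
    then have "x = take m u2" using L(3) by simp
    then have u2: "u2 = x @ z" unfolding z_def by simp
    then have u1: "u1 = z @ y" using e(2) by simp
    have "subst_word \<tau> x @ subst_word \<tau> z = subst_word \<tau> x @ v1 @ z @ w2"
      using h2(5) u2 L(2) e(1) by (metis append.assoc sw_simps(3))
    then have sz: "subst_word \<tau> z = v1 @ z @ w2" by simp
    have "z \<noteq> []" using False ln u2 L(3) by auto
    moreover have "z \<in> lang \<tau>" using lang_factor[OF h1(4)] u1 unfolding is_factor_def by blast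
    ultimately have g0: "generator \<tau> (v1, z, w2)" using sz h1(1) h2(3) by (simp add: generator_def)
    have "generator \<tau> (v1, z @ y, w1)" using g1 u1 by simp
    then have "(Rx \<tau> ^^ length y) (v1, z, w2) = (v1, z @ y, w1)" using R_det[OF S g0] by blast
    then have "(Rx \<tau> ^^ m) (v1, z, w2) = b1" using R(2) b(1) u1 by simp
    then have "E \<tau> 0 m (v1, z, w2) = E \<tau> 0 0 b1" by (simp add: E_def)
    then have "G_related \<tau> b1 (v1, z, w2)" using G_char[OF S] g0 g1 b(1) by metis
    moreover have "gen_length (v1, z, w2) < gen_length b1"
      using b(1) u1 R(2) False \<open>m \<noteq> 0\<close> by (simp add: gen_length_def)
    ultimately show ?thesis using B(1) unfolding basic_def by blast
  qed
qed


lemma aux: assumes S: "is_substitution \<tau>" and B: "basic \<tau> b1" "basic \<tau> b2"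
  and len: "gen_length b1 = gen_length b2" and eq: "E \<tau> i j b1 = E \<tau> k l b2"
  and ki: "k \<le> i" shows "b1 = b2"
proof -
  have g: "generator \<tau> b1" "generator \<tau> b2" using B by (auto simp: basic_def)
  have "i + j = k + l" using arg_cong[OF eq, of gen_length] len by (simp add: len_E)
  moreover define m where "m = i - k"
  ultimately have i: "i = k + m" and l: "l = j + m" using ki by simp_all
  have "(Lx \<tau> ^^ k) ((Lx \<tau> ^^ m) ((Rx \<tau> ^^ j) b1)) = (Lx \<tau> ^^ k) ((Rx \<tau> ^^ l) b2)"
    using eq unfolding E_def i by (simp add: funpow_add)
  then have "(Lx \<tau> ^^ m) ((Rx \<tau> ^^ j) b1) = (Rx \<tau> ^^ l) b2"
    using L_inj_pow[OF S] gen_pow[OF S] g by metis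
  then have "(Rx \<tau> ^^ j) ((Lx \<tau> ^^ m) b1) = (Rx \<tau> ^^ j) ((Rx \<tau> ^^ m) b2)"
    unfolding l by (simp add: LR_comm_pow funpow_add)
  then have "(Lx \<tau> ^^ m) b1 = (Rx \<tau> ^^ m) b2"
    using R_inj_pow[OF S] gen_pow[OF S] g by metis
  then show ?thesis using key[OF S B len] by blast
qed

lemma part1: assumes S: "is_substitution \<tau>" and B: "basic \<tau> b1" "basic \<tau> b2"
  and G: "G_related \<tau> b1 b2" shows "b1 = b2"
proof -
  have "\<not> gen_length b2 < gen_length b1" using B(1) G unfolding basic_def by blast
  moreover have "\<not> gen_length b1 < gen_length b2" using B(2) G_sym[OF G] unfolding basic_def by blast
  ultimately have len: "gen_length b1 = gen_length b2" by simp
  obtain i j k l where eq: "E \<tau> i j b1 = E \<tau> k l b2" using G G_char[OF S] by blast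
  show ?thesis
  proof (cases "k \<le> i")
    case True then show ?thesis using aux[OF S B len eq] by blast
  next
    case False then show ?thesis using aux[OF S B(2,1) len[symmetric] eq[symmetric]] by simp
  qed
qed

theorem mainTheorem4:
  fixes \<tau> :: "'a::finite \<Rightarrow> 'a list"
  assumes "is_substitution \<tau>"
  shows "(\<forall>g1 g2. basic \<tau> g1 \<and> basic \<tau> g2 \<and> g1 \<noteq> g2 \<longrightarrow> \<not> G_related \<tau> g1 g2)
       \<and> (\<forall>g. generator \<tau> g \<longrightarrow> (\<exists>!b. basic \<tau> b \<and> G_related \<tau> g b))"
proof (intro conjI allI impI)
  fix g1 g2 assume "basic \<tau> g1 \<and> basic \<tau> g2 \<and> g1 \<noteq> g2"
  then show "\<not> G_related \<tau> g1 g2" using part1[OF assms] by blast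
next
  fix g assume g: "generator \<tau> g"
  obtain h where h: "G_related \<tau> g h" "\<forall>h'. G_related \<tau> g h' \<longrightarrow> gen_length h \<le> gen_length h'"
    using ex_has_least_nat[of "G_related \<tau> g" g gen_length] G_refl[OF g] by blast
  have "basic \<tau> h"
  proof -
    have "generator \<tau> h" using h(1) unfolding G_related_def by blast
    moreover have "\<not> (\<exists>h'. G_related \<tau> h h' \<and> gen_length h' < gen_length h)"
      using h G_trans[OF assms h(1)] by (meson not_le)
    ultimately show ?thesis unfolding basic_def by blast
  qed
  moreover have "b = h" if "basic \<tau> b \<and> G_related \<tau> g b" for b
  proof -
    have "G_related \<tau> h b" using G_trans[OF assms G_sym[OF h(1)]] that by blast
    then show ?thesis using part1[OF assms \<open>basic \<tau> h\<close>] that by blast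
  qed
  ultimately show "\<exists>!b. basic \<tau> b \<and> G_related \<tau> g b" using h(1) by blast
qed

end
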